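(* Let $c,m>0$ be constants and let $f:\mathbb{Z}\to\mathbb{Z}$ be a non-decreasing map such that $f(j)-f(i)\leq j-i$ for all integers $i<j$, and $f(j)-f(i)\geq c\,(j-i)$ for all integers $i,j$ with $i+m\leq j$. Let $B$ be an integer-valued random variable with $E[|f(B)|]<+\infty$. Then $$\mathrm{Var}[f(B)]\geq c^2\left(1-\frac{2m}{c\sqrt{\mathrm{Var}[B]}}\right)\mathrm{Var}[B].$$ *)

theory Defs
  imports "HOL-Probability.Probability"
begin

text \<open>Variance as an extended nonnegative real: it is \<infinity> when the second
  central moment diverges.  The mean is the Lebesgue integral (the random variable
  will be integrable in our application).\<close>
definition evariance :: "'a measure \<Rightarrow> ('a \<Rightarrow> real) \<Rightarrow> ennreal" where
  "evariance M X = (\<integral>\<^sup>+ x. ennreal ((X x - (\<integral>y. X y \<partial>M))\<^sup>2) \<partial>M)"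

end

theory Submission
  imports Defs
begin

lemma key_pw:
  fixes f :: "int \<Rightarrow> int" and c m \<mu> :: real and j :: int
  assumes "mono f" "c > 0" "m > 0"
    and H: "\<And>i j. real_of_int i + m \<le> real_of_int j \<Longrightarrow>
               real_of_int (f j - f i) \<ge> c * real_of_int (j - i)"
  shows "real_of_int (f j - f \<lfloor>\<mu>\<rfloor>) * (j - \<mu>) \<ge> c*(j - \<lfloor>\<mu>\<rfloor>)*(j-\<mu>) - c*m*\<bar>j-\<mu>\<bar>"
proof -
  define k where "k = \<lfloor>\<mu>\<rfloor>"
  have kl: "real_of_int k \<le> \<mu>" "\<mu> < real_of_int k + 1" unfolding k_def by linarith+
  consider "real_of_int j > \<mu>" | "real_of_int j = \<mu>" | "real_of_int j < \<mu>" by linarith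
  then show ?thesis
  proof cases
    case 1
    then have "j \<ge> k" using kl by linarith
    have A: "real_of_int (f j - f k) \<ge> c*(j-k) - c*m"
    proof (cases "real_of_int k + m \<le> real_of_int j")
      case True
      have "c*m > 0" using assms by simp
      with H[OF True] show ?thesis by simp
    next
      case False
      have "f k \<le> f j" using \<open>j \<ge> k\<close> \<open>mono f\<close> by (simp add: monoD)
      moreover have "c*(j-k) \<le> c*m" using False assms by (intro mult_left_mono) auto
      ultimately show ?thesis by simp
    qed
    have "real_of_int (f j - f k) * (j - \<mu>) \<ge> (c*(j-k) - c*m) * (j-\<mu>)"
      using A 1 by (intro mult_right_mono) auto
    then show ?thesis using 1 unfolding k_def[symmetric] by (simp add: algebra_simps)
  next
    case 2 then show ?thesis by simp
  next
    case 3
    then have "j \<le> k" using kl unfolding k_def by linarith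
    have A: "real_of_int (f k - f j) \<ge> c*(k-j) - c*m"
    proof (cases "real_of_int j + m \<le> real_of_int k")
      case True
      have "c*m > 0" using assms by simp
      with H[OF True] show ?thesis by simp
    next
      case False
      have "f j \<le> f k" using \<open>j \<le> k\<close> \<open>mono f\<close> by (simp add: monoD)
      moreover have "c*(k-j) \<le> c*m" using False assms by (intro mult_left_mono) auto
      ultimately show ?thesis by simp
    qed
    have "real_of_int (f k - f j) * (\<mu> - j) \<ge> (c*(k-j) - c*m) * (\<mu> - j)"
      using A 3 by (intro mult_right_mono) auto
    then show ?thesis using 3 unfolding k_def[symmetric] by (simp add: algebra_simps)
  qed
qed

lemma lin_bd:
  fixes f :: "int \<Rightarrow> int" and c m :: real and j :: int
  assumes "mono f" "c > 0" "m > 0"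
    and H: "\<And>i j. real_of_int i + m \<le> real_of_int j \<Longrightarrow>
               real_of_int (f j - f i) \<ge> c * real_of_int (j - i)"
  shows "c * \<bar>real_of_int j\<bar> \<le> \<bar>real_of_int (f j - f 0)\<bar> + c*m"
proof -
  have cm: "c*m > 0" using assms by simp
  consider "m \<le> real_of_int j" | "0 \<le> j" "real_of_int j < m" | "real_of_int j \<le> -m" | "j < 0" "-m < real_of_int j"
    by linarith
  then show ?thesis
  proof cases
    case 1
    then have "c * real_of_int j \<le> real_of_int (f j - f 0)" using H[of 0 j] by simp
    moreover have "c * \<bar>real_of_int j\<bar> = c * real_of_int j" using 1 assms by simp
    ultimately show ?thesis using cm abs_ge_self[of "real_of_int (f j - f 0)"] by linarith
  next
    case 2
    then have "c * real_of_int j \<le> c*m" using assms by (intro mult_left_mono) auto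
    then show ?thesis using 2 by simp
  next
    case 3
    then have "c * (- real_of_int j) \<le> - real_of_int (f j - f 0)" using H[of j 0] by simp
    moreover have "c * \<bar>real_of_int j\<bar> = c * (- real_of_int j)" using 3 assms by simp
    ultimately show ?thesis using cm abs_ge_minus_self[of "real_of_int (f j - f 0)"] by linarith
  next
    case 4
    then have "c * (- real_of_int j) \<le> c*m" using assms by (intro mult_left_mono) auto
    then show ?thesis using 4 by simp
  qed
qed

theorem lemma4:
  fixes M :: "'a measure" and B :: "'a \<Rightarrow> int" and f :: "int \<Rightarrow> int"
    and c m :: real
  assumes "prob_space M"
    and "c > 0" and "m > 0"
    and "mono f"
    and "\<And>i j. i < j \<Longrightarrow> f j - f i \<le> j - i"
    and "\<And>i j. real_of_int i + m \<le> real_of_int j \<Longrightarrow>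
               real_of_int (f j - f i) \<ge> c * real_of_int (j - i)"
    and "B \<in> measurable M (count_space UNIV)"
    and "integrable M (\<lambda>x. real_of_int (f (B x)))"
  shows "evariance M (\<lambda>x. real_of_int (f (B x))) \<ge>
           ennreal (c\<^sup>2 * (1 - 2 * m / (c * sqrt (enn2real (evariance M (\<lambda>x. real_of_int (B x)))))))
           * evariance M (\<lambda>x. real_of_int (B x))"
proof -
  interpret P: prob_space M by fact
  define X where "X = (\<lambda>x. real_of_int (B x))"
  define F where "F = (\<lambda>x. real_of_int (f (B x)))"
  have Xm: "X \<in> borel_measurable M" unfolding X_def
    by (rule measurable_compose[OF assms(7)]) (simp add: measurable_count_space_eq1)
  have Fm: "F \<in> borel_measurable M" unfolding F_def
    by (rule measurable_compose[OF assms(7)]) (simp add: measurable_count_space_eq1)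
  have iF: "integrable M F" using assms(8) unfolding F_def .
  define a where "a = integral\<^sup>L M F"
  have c1: "c \<le> 1"
  proof -
    define j where "j = \<lceil>m\<rceil>"
    have j0: "j > 0" "real_of_int 0 + m \<le> real_of_int j" using assms(3) unfolding j_def by auto
    have "c * real_of_int j \<le> real_of_int (f j - f 0)" using assms(6)[OF j0(2)] by simp
    also have "\<dots> \<le> real_of_int j" using assms(5)[OF j0(1)] by simp
    finally show ?thesis using j0 by simp
  qed
  have main: "evariance M F \<ge> ennreal (c\<^sup>2 * (1 - 2 * m / (c * sqrt (enn2real (evariance M X))))) * evariance M X"
  proof (cases "evariance M F = \<infinity>")
    case True then show ?thesis by simp
  next
    case False
    have VF: "(\<integral>\<^sup>+x. ennreal ((F x - a)\<^sup>2) \<partial>M) < \<infinity>"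
      using False unfolding evariance_def a_def by (simp add: top.not_eq_extremum)
    have iF2: "integrable M (\<lambda>x. (F x - a)\<^sup>2)"
      by (rule integrableI_nonneg) (use VF Fm in auto)
    have bnd: "(X x)\<^sup>2 \<le> (4*(F x - a)\<^sup>2 + 4*(a - f 0)\<^sup>2 + 2*c\<^sup>2*m\<^sup>2)/c\<^sup>2" for x
    proof -
      have L: "c * \<bar>X x\<bar> \<le> \<bar>real_of_int (f (B x) - f 0)\<bar> + c*m"
        unfolding X_def using lin_bd[OF assms(4,2,3) assms(6)] by blast
      have "(c * \<bar>X x\<bar>)\<^sup>2 \<le> (\<bar>real_of_int (f (B x) - f 0)\<bar> + c*m)\<^sup>2"
        using L assms(2) by (intro power_mono) auto
      also have "\<dots> \<le> 2*(real_of_int (f (B x) - f 0))\<^sup>2 + 2*c\<^sup>2*m\<^sup>2"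
        using sum_squares_ge_zero[of "\<bar>real_of_int (f (B x) - f 0)\<bar> - c*m" 0]
        by (simp add: power2_eq_square algebra_simps)
      also have "(real_of_int (f (B x) - f 0)) = (F x - a) + (a - f 0)" unfolding F_def by simp
      also have "2*((F x - a) + (a - f 0))\<^sup>2 \<le> 4*(F x - a)\<^sup>2 + 4*(a - f 0)\<^sup>2"
        using sum_squares_ge_zero[of "(F x - a) - (a - f 0)" 0]
        by (simp add: power2_eq_square algebra_simps)
      finally have "c\<^sup>2 * (X x)\<^sup>2 \<le> 4*(F x - a)\<^sup>2 + 4*(a - f 0)\<^sup>2 + 2*c\<^sup>2*m\<^sup>2"
        by (simp add: power_mult_distrib)
      then show ?thesis using assms(2) by (simp add: field_simps)
    qed
    have iX2: "integrable M (\<lambda>x. (X x)\<^sup>2)"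
    proof (rule Bochner_Integration.integrable_bound)
      show "integrable M (\<lambda>x. (4*(F x - a)\<^sup>2 + 4*(a - f 0)\<^sup>2 + 2*c\<^sup>2*m\<^sup>2)/c\<^sup>2)"
        using iF2 by (intro integrable_divide Bochner_Integration.integrable_add integrable_mult_right) auto
      show "(\<lambda>x. (X x)\<^sup>2) \<in> borel_measurable M" using Xm by measurable
      show "AE x in M. norm ((X x)\<^sup>2) \<le> norm ((4*(F x - a)\<^sup>2 + 4*(a - f 0)\<^sup>2 + 2*c\<^sup>2*m\<^sup>2)/c\<^sup>2)"
        using bnd by (auto intro!: order_trans[OF _ abs_ge_self])
    qed
    have iX: "integrable M X"
    proof (rule Bochner_Integration.integrable_bound)
      show "integrable M (\<lambda>x. 1 + (X x)\<^sup>2)"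
        using iX2 by (intro Bochner_Integration.integrable_add) auto
      show "X \<in> borel_measurable M" using Xm .
      have "\<bar>X x\<bar> \<le> 1 + (X x)\<^sup>2" for x
        using sum_squares_ge_zero[of "\<bar>X x\<bar> - 1" 0] abs_ge_self[of "X x"]
        by (cases "\<bar>X x\<bar> \<le> 1") (auto simp: power2_eq_square algebra_simps abs_mult_self_eq)
      then show "AE x in M. norm (X x) \<le> norm (1 + (X x)\<^sup>2)" by auto
    qed
    define \<mu> where "\<mu> = integral\<^sup>L M X"
    have iY2: "integrable M (\<lambda>x. (X x - \<mu>)\<^sup>2)"
    proof -
      have e: "(\<lambda>x. (X x - \<mu>)\<^sup>2) = (\<lambda>x. (X x)\<^sup>2 - 2*\<mu>*X x + \<mu>\<^sup>2)"
        by (simp add: power2_diff algebra_simps)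
      show ?thesis unfolding e
        using iX2 iX by (intro Bochner_Integration.integrable_add Bochner_Integration.integrable_diff integrable_mult_right) auto
    qed
    define V where "V = integral\<^sup>L M (\<lambda>x. (X x - \<mu>)\<^sup>2)"
    define W where "W = integral\<^sup>L M (\<lambda>x. (F x - a)\<^sup>2)"
    have V0: "V \<ge> 0" unfolding V_def by (rule integral_nonneg_AE) auto
    have evX: "evariance M X = ennreal V" unfolding evariance_def \<mu>_def[symmetric] V_def
      by (rule nn_integral_eq_integral) (use iY2 in auto)
    have evF: "evariance M F = ennreal W" unfolding evariance_def a_def[symmetric] W_def
      by (rule nn_integral_eq_integral) (use iF2 in auto)
    have EY: "integral\<^sup>L M (\<lambda>x. X x - \<mu>) = 0"
      using iX by (simp add: \<mu>_def P.prob_space)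
    show ?thesis
    proof (cases "V = 0")
      case True then show ?thesis by (simp add: evX)
    next
      case False
      define \<sigma> where "\<sigma> = sqrt V"
      have s0: "\<sigma> > 0" using V0 False unfolding \<sigma>_def by simp
      have Vs: "V = \<sigma>\<^sup>2" using V0 unfolding \<sigma>_def by simp
      define k where "k = \<lfloor>\<mu>\<rfloor>"
      define C where "C = 2*c\<^sup>2*(\<mu>-k) + 2*c*(f k - a)"
      have pw: "(F x - a)\<^sup>2 \<ge> c\<^sup>2*(1 - m/\<sigma>)*(X x - \<mu>)\<^sup>2 + C*(X x - \<mu>) - c\<^sup>2*m*\<sigma>" for x
      proof -
        define yy where "yy = X x - \<mu>"
        define u where "u = F x - a"
        define vv where "vv = real_of_int (f (B x) - f k)"
        define d where "d = real_of_int (f k) - a"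
        have uv: "u = vv + d" unfolding u_def vv_def d_def F_def by simp
        have key: "vv*yy \<ge> c*(yy + (\<mu> - k))*yy - c*m*abs yy"
          using key_pw[OF assms(4,2,3) assms(6), of "B x" \<mu>]
          unfolding vv_def yy_def k_def X_def by simp
        have e0: "u\<^sup>2 - (2*c*(vv*yy) + 2*c*d*yy - c\<^sup>2*yy\<^sup>2) = (u - c*yy)\<^sup>2"
          unfolding uv by (simp add: power2_eq_square algebra_simps)
        have e1: "u\<^sup>2 \<ge> 2*c*(vv*yy) + 2*c*d*yy - c\<^sup>2*yy\<^sup>2"
          using e0 zero_le_power2[of "u - c*yy"] by linarith
        have e2: "2*c*(vv*yy) \<ge> 2*c*(c*(yy + (\<mu> - k))*yy - c*m*abs yy)"
          using key assms(2) by (intro mult_left_mono) auto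
        have e3: "2*c*(c*(yy + (\<mu> - k))*yy - c*m*abs yy) = 2*c\<^sup>2*yy\<^sup>2 + 2*c\<^sup>2*(\<mu>-k)*yy - 2*(c\<^sup>2*m*abs yy)"
          by (simp add: power2_eq_square algebra_simps)
        have ab: "abs yy \<le> (yy\<^sup>2/\<sigma> + \<sigma>)/2"
        proof -
          have "0 \<le> (abs yy - \<sigma>)\<^sup>2" by simp
          then have "2*\<sigma>*abs yy \<le> yy\<^sup>2 + \<sigma>\<^sup>2" by (simp add: power2_eq_square algebra_simps abs_mult_self_eq)
          then show ?thesis using s0 by (simp add: field_simps power2_eq_square)
        qed
        have e4: "c\<^sup>2*m*abs yy \<le> c\<^sup>2*m*((yy\<^sup>2/\<sigma> + \<sigma>)/2)"
          using ab assms(2,3) by (intro mult_left_mono) auto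
        have e5: "c\<^sup>2*(1 - m/\<sigma>)*yy\<^sup>2 + C*yy - c\<^sup>2*m*\<sigma> = c\<^sup>2*yy\<^sup>2 + 2*c\<^sup>2*(\<mu>-k)*yy + 2*c*d*yy - 2*(c\<^sup>2*m*((yy\<^sup>2/\<sigma> + \<sigma>)/2))"
          using s0 unfolding C_def d_def by (simp add: field_simps power2_eq_square)
        have "c\<^sup>2*(1 - m/\<sigma>)*yy\<^sup>2 + C*yy - c\<^sup>2*m*\<sigma> \<le> u\<^sup>2"
          using e1 e2 e3 e4 e5 by linarith
        then show ?thesis unfolding u_def yy_def .
      qed
      have Wi: "W \<ge> integral\<^sup>L M (\<lambda>x. c\<^sup>2*(1 - m/\<sigma>)*(X x - \<mu>)\<^sup>2 + C*(X x - \<mu>) - c\<^sup>2*m*\<sigma>)"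
        unfolding W_def by (rule integral_mono) (use pw iF2 iY2 iX in auto)
      have Ie: "integral\<^sup>L M (\<lambda>x. c\<^sup>2*(1 - m/\<sigma>)*(X x - \<mu>)\<^sup>2 + C*(X x - \<mu>) - c\<^sup>2*m*\<sigma>) = c\<^sup>2*(1 - m/\<sigma>)*V + C*0 - c\<^sup>2*m*\<sigma>"
      proof -
        have i1: "integrable M (\<lambda>x. c\<^sup>2*(1 - m/\<sigma>)*(X x - \<mu>)\<^sup>2)" using iY2 by auto
        have i2: "integrable M (\<lambda>x. C*(X x - \<mu>))" using iX by auto
        have "integral\<^sup>L M (\<lambda>x. c\<^sup>2*(1 - m/\<sigma>)*(X x - \<mu>)\<^sup>2 + C*(X x - \<mu>) - c\<^sup>2*m*\<sigma>)
          = integral\<^sup>L M (\<lambda>x. c\<^sup>2*(1 - m/\<sigma>)*(X x - \<mu>)\<^sup>2) + integral\<^sup>L M (\<lambda>x. C*(X x - \<mu>)) - c\<^sup>2*m*\<sigma>"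
          using i1 i2 by (simp add: P.prob_space)
        also have "\<dots> = c\<^sup>2*(1 - m/\<sigma>)*V + C*0 - c\<^sup>2*m*\<sigma>"
          using EY by (simp add: V_def)
        finally show ?thesis .
      qed
      have Ie2: "c\<^sup>2*(1 - m/\<sigma>)*V + C*0 - c\<^sup>2*m*\<sigma> = c\<^sup>2*V - 2*c\<^sup>2*m*\<sigma>"
        using s0 unfolding Vs by (simp add: field_simps power2_eq_square)
      have W1: "W \<ge> c\<^sup>2*V - 2*c\<^sup>2*m*\<sigma>" using Wi Ie Ie2 by linarith
      have W2: "W \<ge> c\<^sup>2*V - 2*c*m*\<sigma>"
      proof -
        have "c\<^sup>2*m*\<sigma> \<le> c*m*\<sigma>" using c1 assms(2,3) s0
          by (simp add: power2_eq_square mult_right_le_one_le)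
        then show ?thesis using W1 by linarith
      qed
      have ev: "enn2real (evariance M X) = V" using V0 by (simp add: evX)
      show ?thesis
      proof (cases "c\<^sup>2 * (1 - 2 * m / (c * \<sigma>)) \<ge> 0")
        case False then show ?thesis by (simp add: ev \<sigma>_def[symmetric] ennreal_neg)
      next
        case True
        have "c\<^sup>2 * (1 - 2 * m / (c * \<sigma>)) * V = c\<^sup>2*V - 2*c*m*\<sigma>"
          using s0 assms(2) unfolding Vs by (simp add: field_simps power2_eq_square)
        then show ?thesis using True V0 W2
          by (simp add: ev \<sigma>_def[symmetric] evF evX ennreal_mult''[symmetric] ennreal_leI)
      qed
    qed
  qed
  show ?thesis using main by (simp add: X_def F_def)
qed

end
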